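(* Let $G$ be a group satisfying the property $\mathsf{FM}$ and $\nu$ a conjugation-invariant pseudo-norm on $G$. Then for any elements $\mathsf{f},\mathsf{g}$ of $A_\nu$, $\mathsf{f}+\mathsf{g}=\mathsf{g}+\mathsf{f}$.
   Context: A conjugation-invariant pseudo-norm on a group $G$ is a function $\nu\colon G\to\mathbb{R}_{\ge0}$ with $\nu(1)=0$, $\nu(f)=\nu(f^{-1})$, $\nu(fg)\le\nu(f)+\nu(g)$ and $\nu(gfg^{-1})=\nu(f)$ for all $f,g\in G$. Property $\mathsf{FM}$: for a subgroup $H\le G$, let $\nu_H(f)$ be the minimal $k$ such that $f=g_1h_1g_1^{-1}\cdots g_kh_kg_k^{-1}$ ($g_i\in G,h_i\in H$), $\infty$ if none; for $K\subset G$ let $\mathrm{D}^f_H(K)$ be the set of $h_0\in G$ such that for all $g_1,\dots,g_k\in G$ there is $h\in G$ with every element of $hh_0h^{-1}K(hh_0h^{-1})^{-1}$ commuting with every element of $\bigcup_i g_iHg_i^{-1}$. $(G,H)$ satisfies $\mathsf{FM}$ if $\nu_H<\infty$ on $G$ and $\mathrm{D}^f_H(h_1Hh_1^{-1}\cup\dots\cup h_kHh_k^{-1})\ne\emptyset$ for all $h_1,\dots,h_k\in G$; $G$ satisfies $\mathsf{FM}$ if some $(G,H)$ does. $A_G=\coprod_{k\ge0}(G\times\mathbb{R})^k$, elements written as formal words $g_1^{s_1}\cdots g_k^{s_k}$, empty word $1$; $\mathtt{g}\cdot\mathtt{h}$ is concatenation, $\bar{\mathtt{g}}=g_k^{-s_k}\cdots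 g_1^{-s_1}$; $\|\mathtt{g}\|_\nu=\lim_{n\to\infty}\frac1n\nu(g_1^{[s_1n]}\cdots g_k^{[s_kn]})$ ($[\cdot]$ integer part), $\|1\|_\nu=0$; $\mathtt{g}\sim\mathtt{h}$ iff $\|\mathtt{g}\cdot\bar{\mathtt{h}}\|_\nu=0$; $A_\nu=A_G/\sim$ with addition $[\mathtt{g}]+[\mathtt{h}]=[\mathtt{g}\cdot\mathtt{h}]$. *)

theory Defs
  imports "HOL-Algebra.Algebra" "HOL-Library.Extended_Nat" Complex_Main
begin

definition conj_inv_pseudo_norm :: "('a, 'b) monoid_scheme \<Rightarrow> ('a \<Rightarrow> real) \<Rightarrow> bool" where
  "conj_inv_pseudo_norm G \<nu> \<longleftrightarrow>
     (\<forall>f\<in>carrier G. \<nu> f \<ge> 0) \<and>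
     \<nu> \<one>\<^bsub>G\<^esub> = 0 \<and>
     (\<forall>f\<in>carrier G. \<nu> f = \<nu> (inv\<^bsub>G\<^esub> f)) \<and>
     (\<forall>f\<in>carrier G. \<forall>g\<in>carrier G. \<nu> (f \<otimes>\<^bsub>G\<^esub> g) \<le> \<nu> f + \<nu> g) \<and>
     (\<forall>f\<in>carrier G. \<forall>g\<in>carrier G. \<nu> (g \<otimes>\<^bsub>G\<^esub> f \<otimes>\<^bsub>G\<^esub> inv\<^bsub>G\<^esub> g) = \<nu> f)"

definition conj_prod :: "('a, 'b) monoid_scheme \<Rightarrow> ('a \<times> 'a) list \<Rightarrow> 'a" where
  "conj_prod G ps = foldr (\<lambda>(g, h) acc. g \<otimes>\<^bsub>G\<^esub> h \<otimes>\<^bsub>G\<^esub> inv\<^bsub>G\<^esub> g \<otimes>\<^bsub>G\<^esub> acc) ps \<one>\<^bsub>G\<^esub>"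

text \<open>nu_H(f): minimal number of conjugates of elements of H whose product is f (infinity if none).\<close>
definition nu_H :: "('a, 'b) monoid_scheme \<Rightarrow> 'a set \<Rightarrow> 'a \<Rightarrow> enat" where
  "nu_H G H f = Inf {enat (length ps) | ps.
      (\<forall>(g, h)\<in>set ps. g \<in> carrier G \<and> h \<in> H) \<and> f = conj_prod G ps}"

definition conjset :: "('a, 'b) monoid_scheme \<Rightarrow> 'a \<Rightarrow> 'a set \<Rightarrow> 'a set" where
  "conjset G g K = (\<lambda>x. g \<otimes>\<^bsub>G\<^esub> x \<otimes>\<^bsub>G\<^esub> inv\<^bsub>G\<^esub> g) ` K"

definition Df_H :: "('a, 'b) monoid_scheme \<Rightarrow> 'a set \<Rightarrow> 'a set \<Rightarrow> 'a set" where
  "Df_H G H K = {h0 \<in> carrier G. \<forall>gs. set gs \<subseteq> carrier G \<longrightarrow>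
      (\<exists>h\<in>carrier G.
         \<forall>x\<in>conjset G (h \<otimes>\<^bsub>G\<^esub> h0 \<otimes>\<^bsub>G\<^esub> inv\<^bsub>G\<^esub> h) K.
         \<forall>y\<in>(\<Union>g\<in>set gs. conjset G g H). x \<otimes>\<^bsub>G\<^esub> y = y \<otimes>\<^bsub>G\<^esub> x)}"

definition FM_pair :: "('a, 'b) monoid_scheme \<Rightarrow> 'a set \<Rightarrow> bool" where
  "FM_pair G H \<longleftrightarrow> subgroup H G \<and>
     (\<forall>f\<in>carrier G. nu_H G H f < \<infinity>) \<and>
     (\<forall>hs. set hs \<subseteq> carrier G \<longrightarrow> Df_H G H (\<Union>h\<in>set hs. conjset G h H) \<noteq> {})"

definition FM :: "('a, 'b) monoid_scheme \<Rightarrow> bool" where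
  "FM G \<longleftrightarrow> (\<exists>H. FM_pair G H)"

definition words :: "('a, 'b) monoid_scheme \<Rightarrow> ('a \<times> real) list set" where
  "words G = {w. \<forall>(g, s)\<in>set w. g \<in> carrier G}"

definition word_eval :: "('a, 'b) monoid_scheme \<Rightarrow> ('a \<times> real) list \<Rightarrow> nat \<Rightarrow> 'a" where
  "word_eval G w n = foldr (\<lambda>(g, s) acc. (g [^]\<^bsub>G\<^esub> (\<lfloor>s * real n\<rfloor>)) \<otimes>\<^bsub>G\<^esub> acc) w \<one>\<^bsub>G\<^esub>"

definition word_bar :: "('a \<times> real) list \<Rightarrow> ('a \<times> real) list" where
  "word_bar w = rev (map (\<lambda>(g, s). (g, - s)) w)"

definition word_norm :: "('a, 'b) monoid_scheme \<Rightarrow> ('a \<Rightarrow> real) \<Rightarrow> ('a \<times> real) list \<Rightarrow> real" where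
  "word_norm G \<nu> w = lim (\<lambda>n. \<nu> (word_eval G w n) / real n)"

definition word_sim :: "('a, 'b) monoid_scheme \<Rightarrow> ('a \<Rightarrow> real) \<Rightarrow> ('a \<times> real) list \<Rightarrow> ('a \<times> real) list \<Rightarrow> bool" where
  "word_sim G \<nu> v w \<longleftrightarrow> word_norm G \<nu> (v @ word_bar w) = 0"

text \<open>The element [w] of A_nu = A_G / ~ ; addition is [v] + [w] = [v @ w].\<close>
definition A_class :: "('a, 'b) monoid_scheme \<Rightarrow> ('a \<Rightarrow> real) \<Rightarrow> ('a \<times> real) list \<Rightarrow> ('a \<times> real) list set" where
  "A_class G \<nu> w = {v \<in> words G. word_sim G \<nu> w v}"

end

theory Submission
  imports Defs
begin

lemma words_append: "xs \<in> words G \<Longrightarrow> ys \<in> words G \<Longrightarrow> xs @ ys \<in> words G"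
  by (auto simp: words_def)

lemma words_bar: "xs \<in> words G \<Longrightarrow> word_bar xs \<in> words G"
  by (auto simp: words_def word_bar_def)

context group
begin

lemma foldr_eval:
  assumes "w \<in> words G" "acc \<in> carrier G"
  shows "foldr (\<lambda>(g, s) acc. (g [^]\<^bsub>G\<^esub> (\<lfloor>s * real n\<rfloor>)) \<otimes>\<^bsub>G\<^esub> acc) w acc
         = word_eval G w n \<otimes>\<^bsub>G\<^esub> acc \<and> word_eval G w n \<in> carrier G"
  using assms(1)
proof (induction w)
  case Nil
  show ?case using assms(2) by (simp add: word_eval_def)
next
  case (Cons p w)
  obtain g s where p: "p = (g, s)" by (cases p)
  have g: "g \<in> carrier G" using Cons.prems p by (auto simp: words_def)
  have w: "w \<in> words G" using Cons.prems by (auto simp: words_def)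
  from Cons.IH[OF w] have IH: "foldr (\<lambda>(g, s) acc. (g [^]\<^bsub>G\<^esub> (\<lfloor>s * real n\<rfloor>)) \<otimes>\<^bsub>G\<^esub> acc) w acc
         = word_eval G w n \<otimes>\<^bsub>G\<^esub> acc" "word_eval G w n \<in> carrier G" by auto
  show ?case using IH g assms(2)
    by (simp add: p word_eval_def m_assoc)
qed

lemma word_eval_carrier: "w \<in> words G \<Longrightarrow> word_eval G w n \<in> carrier G"
  using foldr_eval[of w "\<one>" n] by blast

lemma word_eval_append:
  assumes "xs \<in> words G" "ys \<in> words G"
  shows "word_eval G (xs @ ys) n = word_eval G xs n \<otimes>\<^bsub>G\<^esub> word_eval G ys n"
proof -
  have "word_eval G (xs @ ys) n = foldr (\<lambda>(g, s) acc. (g [^]\<^bsub>G\<^esub> (\<lfloor>s * real n\<rfloor>)) \<otimes>\<^bsub>G\<^esub> acc) xs (word_eval G ys n)"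
    by (simp add: word_eval_def)
  also have "\<dots> = word_eval G xs n \<otimes>\<^bsub>G\<^esub> word_eval G ys n"
    using foldr_eval[OF assms(1) word_eval_carrier[OF assms(2)]] by blast
  finally show ?thesis .
qed

lemma word_eval_subgroup:
  assumes "subgroup A G" "\<forall>(g, s)\<in>set w. g \<in> A"
  shows "word_eval G w n \<in> A"
  using assms(2)
proof (induction w)
  case Nil
  then show ?case using assms(1) by (simp add: word_eval_def subgroup.one_closed)
next
  case (Cons p w)
  obtain g s where p: "p = (g, s)" by (cases p)
  have "word_eval G w n \<in> A" using Cons by auto
  moreover have "g [^] \<lfloor>s * real n\<rfloor> \<in> A"
    using Cons.prems p subgroup_int_pow_closed[OF assms(1)] by auto
  ultimately show ?case using assms(1)
    by (simp add: p word_eval_def subgroup.m_closed)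
qed

lemma centr_subgroup:
  assumes "y \<in> carrier G"
  shows "subgroup {x \<in> carrier G. x \<otimes> y = y \<otimes> x} G"
  proof (rule subgroupI)
    fix a assume a: "a \<in> {x \<in> carrier G. x \<otimes> y = y \<otimes> x}"
    hence ac: "a \<in> carrier G" by auto
    have "inv a \<otimes> y = inv a \<otimes> (y \<otimes> a) \<otimes> inv a"
      using ac assms(1) by (simp add: m_assoc)
    also have "\<dots> = inv a \<otimes> (a \<otimes> y) \<otimes> inv a" using a by simp
    also have "\<dots> = y \<otimes> inv a" using ac assms(1) by (simp add: m_assoc[symmetric])
    finally show "inv a \<in> {x \<in> carrier G. x \<otimes> y = y \<otimes> x}" using ac by simp
  next
    fix a b assume a: "a \<in> {x \<in> carrier G. x \<otimes> y = y \<otimes> x}" and b: "b \<in> {x \<in> carrier G. x \<otimes> y = y \<otimes> x}"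
    have "a \<otimes> b \<otimes> y = a \<otimes> (y \<otimes> b)" using a b assms(1) by (simp add: m_assoc)
    also have "\<dots> = y \<otimes> (a \<otimes> b)" using a b assms(1) by (simp add: m_assoc[symmetric])
    finally show "a \<otimes> b \<in> {x \<in> carrier G. x \<otimes> y = y \<otimes> x}" using a b by simp
  qed (use assms in \<open>auto intro!: exI[of _ "\<one>"]\<close>)

lemma conj_preimage_subgroup:
  assumes "subgroup Z G" "\<phi> \<in> carrier G"
  shows "subgroup {a \<in> carrier G. \<phi> \<otimes> a \<otimes> inv \<phi> \<in> Z} G"
  proof (rule subgroupI)
    show "{a \<in> carrier G. \<phi> \<otimes> a \<otimes> inv \<phi> \<in> Z} \<noteq> {}"
      using assms subgroup.one_closed[OF assms(1)] by (auto intro!: exI[of _ "\<one>"])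
  next
    fix a assume a: "a \<in> {a \<in> carrier G. \<phi> \<otimes> a \<otimes> inv \<phi> \<in> Z}"
    have "\<phi> \<otimes> inv a \<otimes> inv \<phi> = inv (\<phi> \<otimes> a \<otimes> inv \<phi>)"
      using a assms(2) by (simp add: inv_mult_group m_assoc)
    then show "inv a \<in> {a \<in> carrier G. \<phi> \<otimes> a \<otimes> inv \<phi> \<in> Z}"
      using a subgroup.m_inv_closed[OF assms(1)] by auto
  next
    fix a b assume a: "a \<in> {a \<in> carrier G. \<phi> \<otimes> a \<otimes> inv \<phi> \<in> Z}" and b: "b \<in> {a \<in> carrier G. \<phi> \<otimes> a \<otimes> inv \<phi> \<in> Z}"
    have "\<phi> \<otimes> (a \<otimes> b) \<otimes> inv \<phi> = (\<phi> \<otimes> a \<otimes> inv \<phi>) \<otimes> (\<phi> \<otimes> b \<otimes> inv \<phi>)"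
      using a b assms(2) by (simp add: m_assoc) (simp add: m_assoc[symmetric])
    then show "a \<otimes> b \<in> {a \<in> carrier G. \<phi> \<otimes> a \<otimes> inv \<phi> \<in> Z}"
      using a b subgroup.m_closed[OF assms(1)] by auto
  qed auto


lemma gen_commute:
  assumes S: "S \<subseteq> carrier G" and phi: "\<phi> \<in> carrier G"
    and comm: "\<forall>x\<in>conjset G \<phi> S. \<forall>y\<in>S. x \<otimes> y = y \<otimes> x"
    and a: "a \<in> generate G S" and b: "b \<in> generate G S"
  shows "\<phi> \<otimes> a \<otimes> inv \<phi> \<otimes> b = b \<otimes> (\<phi> \<otimes> a \<otimes> inv \<phi>)"
proof -
  have bc: "b \<in> carrier G" using generate_in_carrier[OF S b] .
  have step1: "x \<otimes> b = b \<otimes> x" if x: "x \<in> conjset G \<phi> S" for x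
  proof -
    have xc: "x \<in> carrier G" using x S phi by (auto simp: conjset_def)
    have "S \<subseteq> {z \<in> carrier G. z \<otimes> x = x \<otimes> z}" using comm x S by auto
    hence "generate G S \<subseteq> {z \<in> carrier G. z \<otimes> x = x \<otimes> z}"
      using generate_subgroup_incl centr_subgroup[OF xc] by blast
    thus ?thesis using b by auto
  qed
  have "S \<subseteq> {a \<in> carrier G. \<phi> \<otimes> a \<otimes> inv \<phi> \<in> {z \<in> carrier G. z \<otimes> b = b \<otimes> z}}"
  proof
    fix s assume s: "s \<in> S"
    have "\<phi> \<otimes> s \<otimes> inv \<phi> \<in> conjset G \<phi> S" using s by (auto simp: conjset_def)
    thus "s \<in> {a \<in> carrier G. \<phi> \<otimes> a \<otimes> inv \<phi> \<in> {z \<in> carrier G. z \<otimes> b = b \<otimes> z}}"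
      using step1 s S phi by auto
  qed
  hence "generate G S \<subseteq> {a \<in> carrier G. \<phi> \<otimes> a \<otimes> inv \<phi> \<in> {z \<in> carrier G. z \<otimes> b = b \<otimes> z}}"
    using generate_subgroup_incl conj_preimage_subgroup[OF centr_subgroup[OF bc] phi] by blast
  thus ?thesis using a by auto
qed

lemma comm_bound:
  assumes nu: "conj_inv_pseudo_norm G \<nu>"
    and ac: "a \<in> carrier G" and bc: "b \<in> carrier G" and phi: "\<phi> \<in> carrier G"
    and cb: "(\<phi> \<otimes> inv a \<otimes> inv \<phi>) \<otimes> b = b \<otimes> (\<phi> \<otimes> inv a \<otimes> inv \<phi>)"
  shows "\<nu> (a \<otimes> b \<otimes> inv a \<otimes> inv b) \<le> 4 * \<nu> \<phi>"
proof -
  have tri: "\<And>x y. x \<in> carrier G \<Longrightarrow> y \<in> carrier G \<Longrightarrow> \<nu> (x \<otimes> y) \<le> \<nu> x + \<nu> y"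
    and cj: "\<And>x y. x \<in> carrier G \<Longrightarrow> y \<in> carrier G \<Longrightarrow> \<nu> (y \<otimes> x \<otimes> inv y) = \<nu> x"
    and iv: "\<And>x. x \<in> carrier G \<Longrightarrow> \<nu> (inv x) = \<nu> x"
    using nu unfolding conj_inv_pseudo_norm_def by (blast, blast, metis)
  define c where "c = \<phi> \<otimes> inv a \<otimes> inv \<phi>"
  define \<psi> where "\<psi> = a \<otimes> \<phi> \<otimes> inv a \<otimes> inv \<phi>"
  have cc: "c \<in> carrier G" using ac phi by (simp add: c_def)
  have psic: "\<psi> \<in> carrier G" using ac phi by (simp add: \<psi>_def)
  have psi_eq: "\<psi> = a \<otimes> c" using ac phi by (simp add: \<psi>_def c_def m_assoc)
  have cb': "c \<otimes> b = b \<otimes> c" using cb by (simp add: c_def)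
  have "\<psi> \<otimes> b \<otimes> inv \<psi> = a \<otimes> (c \<otimes> b) \<otimes> inv c \<otimes> inv a"
    using ac bc cc by (simp add: psi_eq inv_mult_group m_assoc)
  also have "\<dots> = a \<otimes> b \<otimes> inv a"
    using ac bc cc by (simp add: cb' m_assoc)
  finally have k0: "\<psi> \<otimes> b \<otimes> inv \<psi> = a \<otimes> b \<otimes> inv a" .
  have "a \<otimes> b \<otimes> inv a \<otimes> inv b = \<psi> \<otimes> b \<otimes> inv \<psi> \<otimes> inv b" by (simp only: k0)
  also have "\<dots> = \<psi> \<otimes> (b \<otimes> inv \<psi> \<otimes> inv b)" using bc psic by (simp add: m_assoc)
  finally have key: "a \<otimes> b \<otimes> inv a \<otimes> inv b = \<psi> \<otimes> (b \<otimes> inv \<psi> \<otimes> inv b)" .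
  have "\<nu> (a \<otimes> b \<otimes> inv a \<otimes> inv b) \<le> \<nu> \<psi> + \<nu> (b \<otimes> inv \<psi> \<otimes> inv b)"
    unfolding key using tri psic bc by simp
  also have "\<nu> (b \<otimes> inv \<psi> \<otimes> inv b) = \<nu> \<psi>"
    using cj[of "inv \<psi>" b] iv[of \<psi>] psic bc by simp
  also have "\<nu> \<psi> \<le> \<nu> (a \<otimes> \<phi> \<otimes> inv a) + \<nu> (inv \<phi>)"
    unfolding \<psi>_def using tri ac phi by simp
  also have "\<nu> (a \<otimes> \<phi> \<otimes> inv a) = \<nu> \<phi>" using cj ac phi by simp
  also have "\<nu> (inv \<phi>) = \<nu> \<phi>" using iv phi by simp
  finally show ?thesis by simp
qed

lemma swap_bound:
  assumes nu: "conj_inv_pseudo_norm G \<nu>"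
    and Fc: "F \<in> carrier G" and Gc: "H \<in> carrier G" and Wc: "W \<in> carrier G"
    and b1: "\<nu> (F \<otimes> H \<otimes> inv F \<otimes> inv H) \<le> C"
    and b2: "\<nu> (H \<otimes> F \<otimes> inv H \<otimes> inv F) \<le> C"
  shows "abs (\<nu> (F \<otimes> H \<otimes> W) - \<nu> (H \<otimes> F \<otimes> W)) \<le> C"
proof -
  have tri: "\<And>x y. x \<in> carrier G \<Longrightarrow> y \<in> carrier G \<Longrightarrow> \<nu> (x \<otimes> y) \<le> \<nu> x + \<nu> y"
    using nu unfolding conj_inv_pseudo_norm_def by blast
  have e1: "F \<otimes> H \<otimes> W = (F \<otimes> H \<otimes> inv F \<otimes> inv H) \<otimes> (H \<otimes> F \<otimes> W)"
    using Fc Gc Wc by (simp add: m_assoc) (simp add: m_assoc[symmetric])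
  have e2: "H \<otimes> F \<otimes> W = (H \<otimes> F \<otimes> inv H \<otimes> inv F) \<otimes> (F \<otimes> H \<otimes> W)"
    using Fc Gc Wc by (simp add: m_assoc) (simp add: m_assoc[symmetric])
  have "\<nu> (F \<otimes> H \<otimes> W) \<le> \<nu> (F \<otimes> H \<otimes> inv F \<otimes> inv H) + \<nu> (H \<otimes> F \<otimes> W)"
    by (subst e1, rule tri) (use Fc Gc Wc in auto)
  moreover have "\<nu> (H \<otimes> F \<otimes> W) \<le> \<nu> (H \<otimes> F \<otimes> inv H \<otimes> inv F) + \<nu> (F \<otimes> H \<otimes> W)"
    by (subst e2, rule tri) (use Fc Gc Wc in auto)
  ultimately show ?thesis using b1 b2 by linarith
qed

lemma conj_prod_gen:
  assumes "\<forall>(c, h)\<in>set ps. c \<in> carrier G \<and> h \<in> K \<and> conjset G c K \<subseteq> S"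
  shows "conj_prod G ps \<in> generate G S"
  using assms
proof (induction ps)
  case Nil
  then show ?case by (simp add: conj_prod_def generate.one)
next
  case (Cons p ps)
  obtain c h where p: "p = (c, h)" by (cases p)
  have "c \<otimes> h \<otimes> inv c \<in> S" using Cons.prems p by (auto simp: conjset_def)
  hence "c \<otimes> h \<otimes> inv c \<in> generate G S" by (rule generate.incl)
  moreover have "conj_prod G ps \<in> generate G S" using Cons by auto
  ultimately have "c \<otimes> h \<otimes> inv c \<otimes> conj_prod G ps \<in> generate G S" by (rule generate.eng)
  thus ?case by (simp add: p conj_prod_def)
qed

end

lemma lim_shift:
  fixes u w :: "nat \<Rightarrow> real"
  assumes "\<And>n. abs (u n - w n) \<le> C"
  shows "lim (\<lambda>n. u n / real n) = lim (\<lambda>n. w n / real n)"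
proof -
  have d: "(\<lambda>n. u n / real n - w n / real n) \<longlonglongrightarrow> 0"
  proof (rule tendsto_sandwich[of "\<lambda>n. - C / real n" _ _ "\<lambda>n. C / real n"])
    show "\<forall>\<^sub>F n in sequentially. - C / real n \<le> u n / real n - w n / real n"
    proof (rule always_eventually, rule allI)
      fix n
      have "-C \<le> u n - w n" using assms[of n] by (simp add: abs_le_iff)
      hence "(-C) / real n \<le> (u n - w n) / real n" by (rule divide_right_mono) simp
      thus "- C / real n \<le> u n / real n - w n / real n" by (simp add: diff_divide_distrib)
    qed
    show "\<forall>\<^sub>F n in sequentially. u n / real n - w n / real n \<le> C / real n"
    proof (rule always_eventually, rule allI)
      fix n
      have "u n - w n \<le> C" using assms[of n] by (simp add: abs_le_iff)
      hence "(u n - w n) / real n \<le> C / real n" by (rule divide_right_mono) simp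
      thus "u n / real n - w n / real n \<le> C / real n" by (simp add: diff_divide_distrib)
    qed
    show "(\<lambda>n. - C / real n) \<longlonglongrightarrow> 0" using lim_const_over_n[of "-C"] by simp
    show "(\<lambda>n. C / real n) \<longlonglongrightarrow> 0" using lim_const_over_n[of "C"] by simp
  qed
  have d2: "(\<lambda>n. w n / real n - u n / real n) \<longlonglongrightarrow> 0"
    using tendsto_minus[OF d] by simp
  have "(\<lambda>L. (\<lambda>n. u n / real n) \<longlonglongrightarrow> L) = (\<lambda>L. (\<lambda>n. w n / real n) \<longlonglongrightarrow> L)"
    using Lim_transform[OF _ d] Lim_transform[OF _ d2] by (intro ext iffI) auto
  thus ?thesis unfolding lim_def by simp
qed


theorem lemma3p5:
  fixes G :: "('a, 'b) monoid_scheme" and \<nu> :: "'a \<Rightarrow> real"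
  assumes "group G" and "FM G" and "conj_inv_pseudo_norm G \<nu>"
    and "f \<in> words G" and "g \<in> words G"
  shows "A_class G \<nu> (f @ g) = A_class G \<nu> (g @ f)"
proof -
  interpret group G by fact
  from assms(2) obtain H where FMp: "FM_pair G H" unfolding FM_def by blast
  hence sub: "subgroup H G" and fin: "\<forall>f\<in>carrier G. nu_H G H f < \<infinity>"
    and df: "\<forall>hs. set hs \<subseteq> carrier G \<longrightarrow> Df_H G H (\<Union>h\<in>set hs. conjset G h H) \<noteq> {}"
    unfolding FM_pair_def by auto
  have Hc: "H \<subseteq> carrier G" using subgroup.subset[OF sub] .
  have exps: "\<exists>ps. (\<forall>(c, h)\<in>set ps. c \<in> carrier G \<and> h \<in> H) \<and> x = conj_prod G ps"
    if xc: "x \<in> carrier G" for x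
  proof (rule ccontr)
    assume nt: "\<not> ?thesis"
    have "nu_H G H x = Inf {}" unfolding nu_H_def
      by (rule arg_cong[where f=Inf]) (use nt in blast)
    hence "nu_H G H x = \<infinity>" by (simp add: top_enat_def)
    thus False using fin xc by auto
  qed
  define P where "P x = (SOME ps. (\<forall>(c, h)\<in>set ps. c \<in> carrier G \<and> h \<in> H) \<and> x = conj_prod G ps)" for x
  have P: "(\<forall>(c, h)\<in>set (P x). c \<in> carrier G \<and> h \<in> H) \<and> x = conj_prod G (P x)"
    if "x \<in> carrier G" for x
    unfolding P_def using someI_ex[OF exps[OF that]] .
  define cs where "cs = concat (map (\<lambda>p. map fst (P (fst p))) (f @ g))"
  define S where "S = (\<Union>c\<in>set cs. conjset G c H)"
  have fg: "f @ g \<in> words G" using assms(4,5) by (rule words_append)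
  have cs_c: "set cs \<subseteq> carrier G"
  proof
    fix c assume "c \<in> set cs"
    then obtain p q where p: "p \<in> set (f @ g)" and q: "q \<in> set (P (fst p))" and cq: "c = fst q"
      by (auto simp: cs_def)
    have "fst p \<in> carrier G" using p fg by (cases p) (auto simp: words_def)
    thus "c \<in> carrier G" using P[of "fst p"] q cq by auto
  qed
  have Sc: "S \<subseteq> carrier G" using cs_c Hc by (auto simp: S_def conjset_def)
  have letters: "x \<in> generate G S" if xs: "(x, s) \<in> set (f @ g)" for x s
  proof -
    have xc: "x \<in> carrier G" using fg xs by (auto simp: words_def)
    have "conj_prod G (P x) \<in> generate G S"
    proof (rule conj_prod_gen[where K=H])
      show "\<forall>(c, h)\<in>set (P x). c \<in> carrier G \<and> h \<in> H \<and> conjset G c H \<subseteq> S"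
      proof (intro ballI, clarify)
        fix c h assume ch: "(c, h) \<in> set (P x)"
        have "c \<in> set (map fst (P (fst (x, s))))" using ch by force
        moreover have "map fst (P (fst (x, s))) \<in> set (map (\<lambda>p. map fst (P (fst p))) (f @ g))"
          unfolding set_map using xs by (intro image_eqI[where x="(x, s)"]) simp_all
        ultimately have "c \<in> set cs" unfolding cs_def set_concat by (rule UN_I[rotated])
        thus "c \<in> carrier G \<and> h \<in> H \<and> conjset G c H \<subseteq> S"
          using P[OF xc] ch by (auto simp: S_def)
      qed
    qed
    thus ?thesis using P[OF xc] by simp
  qed
  obtain h0 where h0: "h0 \<in> Df_H G H S" using df cs_c unfolding S_def by blast
  have "\<forall>gs. set gs \<subseteq> carrier G \<longrightarrow> (\<exists>h\<in>carrier G.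
         \<forall>x\<in>conjset G (h \<otimes>\<^bsub>G\<^esub> h0 \<otimes>\<^bsub>G\<^esub> inv\<^bsub>G\<^esub> h) S.
         \<forall>y\<in>(\<Union>g\<in>set gs. conjset G g H). x \<otimes>\<^bsub>G\<^esub> y = y \<otimes>\<^bsub>G\<^esub> x)"
    using h0 unfolding Df_H_def by simp
  hence "\<exists>h\<in>carrier G. \<forall>x\<in>conjset G (h \<otimes>\<^bsub>G\<^esub> h0 \<otimes>\<^bsub>G\<^esub> inv\<^bsub>G\<^esub> h) S.
         \<forall>y\<in>(\<Union>g\<in>set cs. conjset G g H). x \<otimes>\<^bsub>G\<^esub> y = y \<otimes>\<^bsub>G\<^esub> x"
    using cs_c by simp
  then obtain h where hc: "h \<in> carrier G"
    and comm: "\<forall>x\<in>conjset G (h \<otimes>\<^bsub>G\<^esub> h0 \<otimes>\<^bsub>G\<^esub> inv\<^bsub>G\<^esub> h) S. \<forall>y\<in>S. x \<otimes>\<^bsub>G\<^esub> y = y \<otimes>\<^bsub>G\<^esub> x"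
    unfolding S_def[symmetric] by blast
  define \<phi> where "\<phi> = h \<otimes>\<^bsub>G\<^esub> h0 \<otimes>\<^bsub>G\<^esub> inv\<^bsub>G\<^esub> h"
  have h0c: "h0 \<in> carrier G" using h0 by (simp add: Df_H_def)
  have phic: "\<phi> \<in> carrier G" using hc h0c by (simp add: \<phi>_def)
  have comm': "\<forall>x\<in>conjset G \<phi> S. \<forall>y\<in>S. x \<otimes>\<^bsub>G\<^esub> y = y \<otimes>\<^bsub>G\<^esub> x" unfolding \<phi>_def by (rule comm)
  have subA: "subgroup (generate G S) G" using generate_is_subgroup[OF Sc] .
  have cb: "\<nu> (a \<otimes>\<^bsub>G\<^esub> b \<otimes>\<^bsub>G\<^esub> inv\<^bsub>G\<^esub> a \<otimes>\<^bsub>G\<^esub> inv\<^bsub>G\<^esub> b) \<le> 4 * \<nu> \<phi>"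
    if a: "a \<in> generate G S" and b: "b \<in> generate G S" for a b
  proof -
    have ia: "inv\<^bsub>G\<^esub> a \<in> generate G S" using subgroup.m_inv_closed[OF subA a] .
    have ac: "a \<in> carrier G" using subgroup.mem_carrier[OF subA a] .
    have bc: "b \<in> carrier G" using subgroup.mem_carrier[OF subA b] .
    show ?thesis
      by (rule comm_bound[OF assms(3) ac bc phic], rule gen_commute[OF Sc phic comm' ia b])
  qed
  have fA: "word_eval G f n \<in> generate G S" for n
    by (rule word_eval_subgroup[OF subA]) (use letters in auto)
  have gA: "word_eval G g n \<in> generate G S" for n
    by (rule word_eval_subgroup[OF subA]) (use letters in auto)
  have eq: "word_norm G \<nu> ((f @ g) @ word_bar v) = word_norm G \<nu> ((g @ f) @ word_bar v)"
    if v: "v \<in> words G" for v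
    unfolding word_norm_def
  proof (rule lim_shift[where C = "4 * \<nu> \<phi>"])
    fix n
    have bv: "word_bar v \<in> words G" using v by (rule words_bar)
    define F where "F = word_eval G f n"
    define E where "E = word_eval G g n"
    define W where "W = word_eval G (word_bar v) n"
    have Fc: "F \<in> carrier G" using word_eval_carrier[OF assms(4)] by (simp add: F_def)
    have Ec: "E \<in> carrier G" using word_eval_carrier[OF assms(5)] by (simp add: E_def)
    have Wc: "W \<in> carrier G" using word_eval_carrier[OF bv] by (simp add: W_def)
    have e1: "word_eval G ((f @ g) @ word_bar v) n = F \<otimes>\<^bsub>G\<^esub> E \<otimes>\<^bsub>G\<^esub> W"
      unfolding word_eval_append[OF fg bv] word_eval_append[OF assms(4,5)] F_def E_def W_def ..
    have e2: "word_eval G ((g @ f) @ word_bar v) n = E \<otimes>\<^bsub>G\<^esub> F \<otimes>\<^bsub>G\<^esub> W"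
      unfolding word_eval_append[OF words_append[OF assms(5,4)] bv] word_eval_append[OF assms(5,4)]
        F_def E_def W_def ..
    show "abs (\<nu> (word_eval G ((f @ g) @ word_bar v) n) - \<nu> (word_eval G ((g @ f) @ word_bar v) n)) \<le> 4 * \<nu> \<phi>"
      unfolding e1 e2
      by (rule swap_bound[OF assms(3) Fc Ec Wc])
        (unfold F_def E_def, rule cb[OF fA gA], rule cb[OF gA fA])
  qed
  show ?thesis unfolding A_class_def word_sim_def using eq by auto
qed

end
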